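(* Fix $\epsilon_0>0$, $c>0$, $h\in[k]$, and suppose $n\alpha\ge c\log n$. Then there is an event $\mathcal{E}^{\mathrm{con}}_{\epsilon_0}$ with $\mathbb{P}[\mathcal{E}^{\mathrm{con}}_{\epsilon_0}]\ge 1-kn^{-c/4}$ on which, for every $g\in[k]$ with $g\neq h$, $$\sum_{i\in T_g^*}\mathbf{1}\Big\{\epsilon_0^2\|\theta_g-\theta_h\|^2\le\langle w_i,\theta_h-\theta_g\rangle\Big\}\ \le\ \frac{5n_g^*}{2\epsilon_0^4(\Delta/\sigma)^2}.$$
   Context: Model: $Y_i=\theta_{z_i}+w_i$, $i=1,\dots,n$, with $z\in[k]^n$, centroids $\theta_1,\dots,\theta_k\in\mathbb{R}^d$, and $w_1,\dots,w_n$ independent zero-mean sub-Gaussian vectors with parameter $\sigma>0$, i.e. $\mathbb{E}[e^{\langle a,w_i\rangle}]\le e^{\sigma^2\|a\|^2/2}$ for all $a\in\mathbb{R}^d$. $T_g^*=\{i\in[n]:z_i=g\}$, $n_g^*=|T_g^*|$, $\alpha=\min_g n_g^*/n$, $\Delta=\min_{g\ne h}\|\theta_g-\theta_h\|$ (Euclidean norm). *)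

theory Defs
  imports "HOL-Probability.Probability"
begin

definition cluster :: "nat \<Rightarrow> (nat \<Rightarrow> nat) \<Rightarrow> nat \<Rightarrow> nat set" where
  "cluster n z g = {i \<in> {1..n}. z i = g}"

definition cluster_size :: "nat \<Rightarrow> (nat \<Rightarrow> nat) \<Rightarrow> nat \<Rightarrow> nat" where
  "cluster_size n z g = card (cluster n z g)"

definition min_prop :: "nat \<Rightarrow> nat \<Rightarrow> (nat \<Rightarrow> nat) \<Rightarrow> real" where
  "min_prop n k z = Min ((\<lambda>g. real (cluster_size n z g) / real n) ` {1..k})"

definition min_sep :: "nat \<Rightarrow> (nat \<Rightarrow> 'a::real_normed_vector) \<Rightarrow> real" where
  "min_sep k \<theta> = Min {norm (\<theta> g - \<theta> h) | g h. g \<in> {1..k} \<and> h \<in> {1..k} \<and> g \<noteq> h}"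

definition subgaussian :: "'w measure \<Rightarrow> real \<Rightarrow> ('w \<Rightarrow> 'a::euclidean_space) \<Rightarrow> bool" where
  "subgaussian M \<sigma> X \<longleftrightarrow>
     (\<forall>a::'a. (\<integral>\<^sup>+ \<omega>. ennreal (exp (a \<bullet> X \<omega>)) \<partial>M) \<le> ennreal (exp (\<sigma>\<^sup>2 * (norm a)\<^sup>2 / 2)))"

end

theory Submission
  imports Defs
begin

lemma (in prob_space) one_sample:
  fixes W :: "'a \<Rightarrow> 'b::euclidean_space" and v :: 'b
  assumes Wm: "W \<in> borel_measurable M" and sg: "subgaussian M \<sigma> W"
    and \<sigma>: "\<sigma> > 0" and e: "e > 0" and mu: "\<mu> \<ge> 0"
    and s: "s \<le> e^4 * (norm v)\<^sup>2 / \<sigma>\<^sup>2"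
  shows "(\<integral>\<^sup>+\<omega>. ennreal (exp (\<mu> * (if e\<^sup>2 * (norm v)\<^sup>2 \<le> W \<omega> \<bullet> v then 1 else 0))) \<partial>M)
          \<le> ennreal (exp ((exp \<mu> - 1) * exp (- s / 2)))"
proof -
  define D where "D = (norm v)\<^sup>2"
  define l where "l = e\<^sup>2 / \<sigma>\<^sup>2"
  have l: "l > 0" using e \<sigma> by (simp add: l_def)
  define C where "C = (exp \<mu> - 1) * exp (- l * e\<^sup>2 * D)"
  have C: "C \<ge> 0" using mu by (simp add: C_def)
  have pw: "ennreal (exp (\<mu> * (if e\<^sup>2 * D \<le> W \<omega> \<bullet> v then 1 else 0)))
        \<le> 1 + ennreal C * ennreal (exp ((l *\<^sub>R v) \<bullet> W \<omega>))" for \<omega>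
  proof -
    have "exp (\<mu> * (if e\<^sup>2 * D \<le> W \<omega> \<bullet> v then 1 else 0)) \<le> 1 + C * exp ((l *\<^sub>R v) \<bullet> W \<omega>)"
    proof (cases "e\<^sup>2 * D \<le> W \<omega> \<bullet> v")
      case True
      have "1 \<le> exp (l * (W \<omega> \<bullet> v) - l * e\<^sup>2 * D)"
        using True l by (simp add: mult_left_mono right_diff_distrib[symmetric] mult.assoc)
      hence "exp \<mu> - 1 \<le> (exp \<mu> - 1) * exp (l * (W \<omega> \<bullet> v) - l * e\<^sup>2 * D)"
        using mu by (simp add: mult_le_cancel_left1)
      also have "\<dots> = C * exp ((l *\<^sub>R v) \<bullet> W \<omega>)"
        by (simp add: C_def exp_diff exp_minus inner_commute field_simps)
      finally show ?thesis using True by simp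
    next
      case False
      then show ?thesis using C by simp
    qed
    hence "ennreal (exp (\<mu> * (if e\<^sup>2 * D \<le> W \<omega> \<bullet> v then 1 else 0))) \<le> ennreal (1 + C * exp ((l *\<^sub>R v) \<bullet> W \<omega>))"
      by (rule ennreal_leI)
    also have "\<dots> = 1 + ennreal C * ennreal (exp ((l *\<^sub>R v) \<bullet> W \<omega>))"
      using C by (simp add: ennreal_plus ennreal_mult)
    finally show ?thesis .
  qed
  have "(\<integral>\<^sup>+\<omega>. ennreal (exp (\<mu> * (if e\<^sup>2 * D \<le> W \<omega> \<bullet> v then 1 else 0))) \<partial>M)
     \<le> (\<integral>\<^sup>+\<omega>. 1 + ennreal C * ennreal (exp ((l *\<^sub>R v) \<bullet> W \<omega>)) \<partial>M)"
    by (intro nn_integral_mono pw)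
  also have "\<dots> = 1 + ennreal C * (\<integral>\<^sup>+\<omega>. ennreal (exp ((l *\<^sub>R v) \<bullet> W \<omega>)) \<partial>M)"
    using Wm by (simp add: nn_integral_add nn_integral_cmult emeasure_space_1)
  also have "\<dots> \<le> 1 + ennreal C * ennreal (exp (\<sigma>\<^sup>2 * (norm (l *\<^sub>R v))\<^sup>2 / 2))"
  proof -
    have sg': "(\<integral>\<^sup>+\<omega>. ennreal (exp ((l *\<^sub>R v) \<bullet> W \<omega>)) \<partial>M) \<le> ennreal (exp (\<sigma>\<^sup>2 * (norm (l *\<^sub>R v))\<^sup>2 / 2))"
      using sg unfolding subgaussian_def by (rule spec)
    show ?thesis by (intro add_left_mono mult_left_mono[OF sg']) simp
  qed
  also have "\<dots> = ennreal (1 + C * exp (\<sigma>\<^sup>2 * (norm (l *\<^sub>R v))\<^sup>2 / 2))"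
    using C by (simp add: ennreal_plus ennreal_mult)
  also have "C * exp (\<sigma>\<^sup>2 * (norm (l *\<^sub>R v))\<^sup>2 / 2) = (exp \<mu> - 1) * exp (- (e^4) * D / (2*\<sigma>\<^sup>2))"
  proof -
    have "- l * e\<^sup>2 * D + \<sigma>\<^sup>2 * (norm (l *\<^sub>R v))\<^sup>2 / 2 = - (e^4) * D / (2*\<sigma>\<^sup>2)"
      using \<sigma> by (simp add: l_def D_def power_mult_distrib field_simps power2_eq_square numeral_eq_Suc)
    thus ?thesis by (simp add: C_def mult.assoc exp_add[symmetric])
  qed
  also have "(exp \<mu> - 1) * exp (- (e^4) * D / (2*\<sigma>\<^sup>2)) \<le> (exp \<mu> - 1) * exp (- s / 2)"
  proof -
    have "s / 2 \<le> e^4 * D / (2*\<sigma>\<^sup>2)" using s by (simp add: D_def field_simps)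
    thus ?thesis using mu by (intro mult_left_mono) auto
  qed
  hence "ennreal (1 + (exp \<mu> - 1) * exp (- (e^4) * D / (2*\<sigma>\<^sup>2))) \<le> ennreal (exp ((exp \<mu> - 1) * exp (- s / 2)))"
    by (intro ennreal_leI order_trans[OF _ exp_ge_add_one_self]) simp
  finally show ?thesis by (simp add: D_def)
qed


lemma (in prob_space) count_tail:
  fixes w :: "nat \<Rightarrow> 'a \<Rightarrow> 'b::euclidean_space" and v :: 'b and T :: "nat set"
  assumes fin: "finite T" and ind: "indep_vars (\<lambda>_. borel) w T"
    and wm: "\<forall>i\<in>T. w i \<in> borel_measurable M" and sg: "\<forall>i\<in>T. subgaussian M \<sigma> (w i)"
    and \<sigma>: "\<sigma> > 0" and e: "e > 0" and s0: "s > 0" and s: "s \<le> e^4 * (norm v)\<^sup>2 / \<sigma>\<^sup>2"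
  shows "prob {\<omega>\<in>space M. (5 * real (card T) / (2 * s) :: real) <
            (\<Sum>i\<in>T. (if e\<^sup>2 * (norm v)\<^sup>2 \<le> w i \<omega> \<bullet> v then 1 else (0::real)))}
         \<le> exp (- real (card T) / 4)"
proof -
  define X where "X i \<omega> = (if e\<^sup>2 * (norm v)\<^sup>2 \<le> w i \<omega> \<bullet> v then 1 else 0::real)" for i \<omega>
  define S where "S \<omega> = (\<Sum>i\<in>T. X i \<omega>)" for \<omega>
  define \<mu> where "\<mu> = s / 2"
  define N where "N = real (card T)"
  define m where "m = 5 * N / (2 * s)"
  define q where "q = (exp \<mu> - 1) * exp (- s / 2)"
  have mu: "\<mu> > 0" using s0 by (simp add: \<mu>_def)
  have Sm: "S \<in> borel_measurable M"
    unfolding S_def X_def using wm by (intro borel_measurable_sum) auto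
  have ev: "{\<omega>\<in>space M. S \<omega> \<ge> m} \<in> events" using Sm by measurable
  have "emeasure M {\<omega>\<in>space M. m < S \<omega>} \<le> emeasure M {\<omega>\<in>space M. S \<omega> \<ge> m}"
    by (intro emeasure_mono ev) auto
  also have "\<dots> \<le> ennreal (exp (-\<mu> * m)) * (\<integral>\<^sup>+\<omega>. ennreal (exp (\<mu> * S \<omega>)) * indicator (space M) \<omega> \<partial>M)"
    by (intro Chernoff_ineq_nn_integral_ge mu) (use Sm in auto)
  also have "(\<integral>\<^sup>+\<omega>. ennreal (exp (\<mu> * S \<omega>)) * indicator (space M) \<omega> \<partial>M)
      = (\<integral>\<^sup>+\<omega>. (\<Prod>i\<in>T. ennreal (exp (\<mu> * X i \<omega>))) \<partial>M)"
    by (intro nn_integral_cong)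
       (simp add: S_def sum_distrib_left exp_sum fin prod_ennreal)
  also have "\<dots> = (\<Prod>i\<in>T. \<integral>\<^sup>+\<omega>. ennreal (exp (\<mu> * X i \<omega>)) \<partial>M)"
    unfolding X_def
    by (intro indep_vars_nn_integral fin indep_vars_compose2[OF ind]) auto
  also have "\<dots> \<le> (\<Prod>i\<in>T. ennreal (exp q))"
  proof (intro prod_mono_ennreal)
    fix i assume i: "i \<in> T"
    show "(\<integral>\<^sup>+\<omega>. ennreal (exp (\<mu> * X i \<omega>)) \<partial>M) \<le> ennreal (exp q)"
      unfolding X_def q_def
      by (rule one_sample) (use wm sg i \<sigma> e mu s in auto)
  qed
  also have "(\<Prod>i\<in>T. ennreal (exp q)) = ennreal (exp (N * q))"
    by (simp add: N_def exp_of_nat_mult ennreal_power)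
  also have "ennreal (exp (-\<mu> * m)) * ennreal (exp (N * q)) = ennreal (exp (-\<mu> * m + N * q))"
    by (simp add: ennreal_mult[symmetric] flip: exp_add)
  also have "-\<mu> * m + N * q \<le> - N / 4"
  proof -
    have N: "N \<ge> 0" by (simp add: N_def)
    have "\<mu> * m = 5 * N / 4" using s0 by (simp add: \<mu>_def m_def field_simps)
    moreover have "q = 1 - exp (- s / 2)"
      by (simp add: q_def \<mu>_def algebra_simps exp_minus_inverse flip: exp_add)
    moreover have "N * (1 - exp (- s / 2)) \<le> N" using N by (simp add: mult_left_le)
    ultimately show ?thesis by (simp only: minus_mult_left[symmetric])
  qed
  hence "ennreal (exp (-\<mu> * m + N * q)) \<le> ennreal (exp (- N / 4))"
    by (intro ennreal_leI) simp
  finally have "emeasure M {\<omega>\<in>space M. m < S \<omega>} \<le> ennreal (exp (- N / 4))"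
    by (metis mult_left_mono zero_le)
  hence "prob {\<omega>\<in>space M. m < S \<omega>} \<le> exp (- N / 4)"
    by (simp add: emeasure_eq_measure)
  thus ?thesis by (simp add: m_def S_def X_def N_def)
qed


theorem mainTheorem4:
  fixes M :: "'w measure" and w :: "nat \<Rightarrow> 'w \<Rightarrow> 'a::euclidean_space"
    and \<theta> :: "nat \<Rightarrow> 'a" and z :: "nat \<Rightarrow> nat"
    and n k h :: nat and \<sigma> \<epsilon>0 c :: real
  assumes "prob_space M"
    and "n \<ge> 1"
    and "\<forall>i\<in>{1..n}. z i \<in> {1..k}"
    and "\<forall>g\<in>{1..k}. \<forall>g'\<in>{1..k}. g \<noteq> g' \<longrightarrow> \<theta> g \<noteq> \<theta> g'"
    and "\<forall>i\<in>{1..n}. w i \<in> borel_measurable M"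
    and "prob_space.indep_vars M (\<lambda>_. borel) w {1..n}"
    and "\<forall>i\<in>{1..n}. integrable M (w i) \<and> prob_space.expectation M (w i) = 0"
    and "\<sigma> > 0"
    and "\<forall>i\<in>{1..n}. subgaussian M \<sigma> (w i)"
    and "\<epsilon>0 > 0" and "c > 0" and "h \<in> {1..k}"
    and "real n * min_prop n k z \<ge> c * ln (real n)"
  shows "\<exists>E \<in> sets M.
           measure M E \<ge> 1 - real k * real n powr (- c / 4) \<and>
           (\<forall>\<omega>\<in>E. \<forall>g\<in>{1..k}. g \<noteq> h \<longrightarrow>
              (\<Sum>i\<in>cluster n z g.
                 (if \<epsilon>0\<^sup>2 * (norm (\<theta> g - \<theta> h))\<^sup>2 \<le> w i \<omega> \<bullet> (\<theta> h - \<theta> g) then 1 else 0 :: real))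
              \<le> 5 * real (cluster_size n z g) / (2 * \<epsilon>0 ^ 4 * (min_sep k \<theta> / \<sigma>)\<^sup>2))"
proof -
  interpret P: prob_space M by (rule assms(1))
  define \<Delta> where "\<Delta> = min_sep k \<theta>"
  define s where "s = \<epsilon>0 ^ 4 * (\<Delta> / \<sigma>)\<^sup>2"
  define G where "G = {1..k} - {h}"
  define X where "X g i \<omega> = (if \<epsilon>0\<^sup>2 * (norm (\<theta> g - \<theta> h))\<^sup>2 \<le> w i \<omega> \<bullet> (\<theta> h - \<theta> g) then 1 else 0 :: real)"
    for g i \<omega>
  define B where "B g = {\<omega>\<in>space M. 5 * real (cluster_size n z g) / (2 * \<epsilon>0 ^ 4 * (\<Delta> / \<sigma>)\<^sup>2)
                 < (\<Sum>i\<in>cluster n z g. X g i \<omega>)}" for g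
  define E where "E = space M - (\<Union>g\<in>G. B g)"
  have clsub: "cluster n z g \<subseteq> {1..n}" for g by (auto simp: cluster_def)
  have clfin: "finite (cluster n z g)" for g using clsub finite_subset by blast
  have wm: "\<forall>i\<in>{1..n}. w i \<in> borel_measurable M" using assms(5) .
  have Bev: "B g \<in> sets M" for g
  proof -
    have "(\<lambda>\<omega>. \<Sum>i\<in>cluster n z g. X g i \<omega>) \<in> borel_measurable M"
    proof (intro borel_measurable_sum)
      fix i assume "i \<in> cluster n z g"
      hence [measurable]: "w i \<in> borel_measurable M" using wm clsub by blast
      show "X g i \<in> borel_measurable M" unfolding X_def by measurable
    qed
    thus ?thesis unfolding B_def by measurable
  qed
  have Eev: "E \<in> sets M" unfolding E_def using Bev by auto
  have Bbound: "measure M (B g) \<le> real n powr (- c / 4)" if g: "g \<in> G" for g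
  proof -
    from g have gk: "g \<in> {1..k}" and gh: "g \<noteq> h" by (auto simp: G_def)
    define Sset where "Sset = {norm (\<theta> g - \<theta> h) | g h. g \<in> {1..k} \<and> h \<in> {1..k} \<and> g \<noteq> h}"
    have Sfin: "finite Sset"
    proof -
      have "Sset \<subseteq> (\<lambda>(g,h). norm (\<theta> g - \<theta> h)) ` ({1..k} \<times> {1..k})"
        unfolding Sset_def by auto
      thus ?thesis using finite_subset by blast
    qed
    have gmem: "norm (\<theta> g - \<theta> h) \<in> Sset" unfolding Sset_def using gk gh assms(12) by blast
    have Dle: "\<Delta> \<le> norm (\<theta> g - \<theta> h)"
      unfolding \<Delta>_def min_sep_def Sset_def[symmetric] using Sfin gmem by (rule Min_le)
    have "\<forall>x\<in>Sset. x > 0" unfolding Sset_def using assms(4) by auto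
    hence Dpos: "\<Delta> > 0"
      unfolding \<Delta>_def min_sep_def Sset_def[symmetric] using Sfin gmem
      by (subst Min_gr_iff) auto
    have spos: "s > 0" using Dpos assms(8,10) by (simp add: s_def)
    have sle: "s \<le> \<epsilon>0 ^ 4 * (norm (\<theta> h - \<theta> g))\<^sup>2 / \<sigma>\<^sup>2"
    proof -
      have "\<Delta>\<^sup>2 \<le> (norm (\<theta> h - \<theta> g))\<^sup>2"
        using Dle Dpos by (simp add: norm_minus_commute power_mono)
      hence "\<epsilon>0 ^ 4 * \<Delta>\<^sup>2 / \<sigma>\<^sup>2 \<le> \<epsilon>0 ^ 4 * (norm (\<theta> h - \<theta> g))\<^sup>2 / \<sigma>\<^sup>2"
        using assms(8,10) by (intro divide_right_mono mult_left_mono) auto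
      thus ?thesis by (simp add: s_def power_divide)
    qed
    have tail: "measure M {\<omega>\<in>space M. (5 * real (card (cluster n z g)) / (2 * s) :: real) <
            (\<Sum>i\<in>cluster n z g. (if \<epsilon>0\<^sup>2 * (norm (\<theta> h - \<theta> g))\<^sup>2 \<le> w i \<omega> \<bullet> (\<theta> h - \<theta> g) then 1 else (0::real)))}
         \<le> exp (- real (card (cluster n z g)) / 4)"
      using P.count_tail[OF clfin P.indep_vars_subset[OF assms(6) clsub], where \<sigma>=\<sigma> and e=\<epsilon>0 and s=s and v="\<theta> h - \<theta> g"]
        wm assms(9) clsub assms(8,10) spos sle by blast
    have Beq: "B g = {\<omega>\<in>space M. (5 * real (card (cluster n z g)) / (2 * s) :: real) <
            (\<Sum>i\<in>cluster n z g. (if \<epsilon>0\<^sup>2 * (norm (\<theta> h - \<theta> g))\<^sup>2 \<le> w i \<omega> \<bullet> (\<theta> h - \<theta> g) then 1 else (0::real)))}"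
      unfolding B_def X_def s_def cluster_size_def by (simp add: norm_minus_commute mult.assoc)
    have n0: "real n > 0" using assms(2) by simp
    have "min_prop n k z \<le> real (cluster_size n z g) / real n"
      unfolding min_prop_def using gk by (intro Min_le) auto
    hence "real n * min_prop n k z \<le> real (cluster_size n z g)"
      using n0 by (simp add: field_simps)
    hence ng: "c * ln (real n) \<le> real (card (cluster n z g))"
      using assms(13) by (simp add: cluster_size_def)
    have "exp (- real (card (cluster n z g)) / 4) \<le> exp (- (c * ln (real n)) / 4)"
      using ng by simp
    also have "\<dots> = real n powr (- c / 4)"
      using n0 by (simp add: powr_def)
    finally show ?thesis using tail Beq by simp
  qed
  have Gfin: "finite G" by (simp add: G_def)
  have "measure M (\<Union>g\<in>G. B g) \<le> (\<Sum>g\<in>G. measure M (B g))"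
    using Gfin Bev by (intro measure_subadditive_finite) (auto simp: P.emeasure_eq_measure)
  also have "\<dots> \<le> (\<Sum>g\<in>G. real n powr (- c / 4))"
    by (intro sum_mono Bbound)
  also have "\<dots> = real (card G) * real n powr (- c / 4)" by simp
  also have "\<dots> \<le> real k * real n powr (- c / 4)"
    by (intro mult_right_mono) (auto simp: G_def intro: order_trans[OF card_Diff1_le])
  finally have U: "measure M (\<Union>g\<in>G. B g) \<le> real k * real n powr (- c / 4)" .
  have "measure M E = 1 - measure M (\<Union>g\<in>G. B g)"
    unfolding E_def using Bev by (subst P.prob_compl) auto
  hence mE: "measure M E \<ge> 1 - real k * real n powr (- c / 4)" using U by simp
  have "\<forall>\<omega>\<in>E. \<forall>g\<in>{1..k}. g \<noteq> h \<longrightarrow>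
              (\<Sum>i\<in>cluster n z g.
                 (if \<epsilon>0\<^sup>2 * (norm (\<theta> g - \<theta> h))\<^sup>2 \<le> w i \<omega> \<bullet> (\<theta> h - \<theta> g) then 1 else 0 :: real))
              \<le> 5 * real (cluster_size n z g) / (2 * \<epsilon>0 ^ 4 * (min_sep k \<theta> / \<sigma>)\<^sup>2)"
  proof (intro ballI impI)
    fix \<omega> g assume \<omega>: "\<omega> \<in> E" and g: "g \<in> {1..k}" "g \<noteq> h"
    hence "\<omega> \<notin> B g" "\<omega> \<in> space M" unfolding E_def G_def by auto
    thus "(\<Sum>i\<in>cluster n z g.
                 (if \<epsilon>0\<^sup>2 * (norm (\<theta> g - \<theta> h))\<^sup>2 \<le> w i \<omega> \<bullet> (\<theta> h - \<theta> g) then 1 else 0 :: real))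
              \<le> 5 * real (cluster_size n z g) / (2 * \<epsilon>0 ^ 4 * (min_sep k \<theta> / \<sigma>)\<^sup>2)"
      unfolding B_def X_def \<Delta>_def by auto
  qed
  with Eev mE show ?thesis by blast
qed

end
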